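(* In the setting described in the context, if $g_m\in\widetilde{I}$ then $m\in S$.
   Context: $\Phi$ is a commutative ring with unity $1\ne0$, regarded as a differential ring with the commuting derivations $\delta_1,\delta_2$ acting as zero. $S\subseteq\mathbb{N}$ is recursively enumerable and $M$ is a two-tape acyclic Minsky machine with states $q_0,\ldots,q_n$ ($q_0$ terminal) such that for every $x\in\mathbb{N}$, starting at configuration $[1,2^{2^x},0]$, $M$ reaches $[0,1,0]$ in finitely many steps if $x\in S$ and operates infinitely if $x\notin S$. Minsky machine conventions: two tapes infinite to the right with cells $0,1,2,\ldots$; cell $0$ contains $1$, all others $0$; a configuration $[i,a,b]$ means state $q_i$, head at cell $a$ of tape 1 and cell $b$ of tape 2. Commands are $q_i\varepsilon\sigma\to q_jT_\alpha T_\beta$ with $1\le i\le n$, $0\le j\le n$, $\varepsilon,\sigma\in\{0,1\}$, $\alpha,\beta\in\{-1,0,1\}$, $\alpha\ge0$ if $\varepsilon=1$, $\beta\ge0$ if $\sigma=1$, at most one per triple $(i,\varepsilon,\sigma)$; such a command applies to $[i,a,b]$ when ($\varepsilon=1$ iff $a=0$) and ($\sigma=1$ iff $b=0$), producing $[j,a+\alpha,b+\beta]$. Acyclic means no configuration recurs after a positive number of steps. $A=\Phi\{x_1,x_2,q_0,\ldots,q_n\}$ is the differential polynomial ring w.r.t. $\delta_1,\delta_2$ (polynomial ring in independent variables $\delta_1^a\delta_2^b(y)$, $y\in\{x_1,x_2,q_0,\ldots,q_n\}$, $\delta_1,\delta_2$ raising the corresponding exponent). $J$ is the differential ideal generated by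 $\delta_1(x_2),\delta_2(x_1)$, and $B=A/J$. For each command of $M$, $g(i,\varepsilon,\sigma)$ is the image in $B$ of $x_1^{\varepsilon}x_2^{\sigma}\delta_1^{1-\varepsilon}\delta_2^{1-\sigma}(q_i)-x_1^{\varepsilon}x_2^{\sigma}\delta_1^{1-\varepsilon+\alpha}\delta_2^{1-\sigma+\beta}(q_j)$; $\widetilde{I}$ is the differential ideal of $B$ generated by all $g(i,\varepsilon,\sigma)$; and $g_m$ is the image in $B$ of $x_1x_2\delta_1^{2^{2^m}}(q_1)-x_1x_2\delta_1(q_0)$. *)

theory Defs
  imports "HOL-Library.Poly_Mapping" "HOL-Algebra.QuotRing"
begin

text \<open>A command q_i eps sigma -> q_j T_alpha T_beta is stored as
  cmd i eps sigma = Some (j, alpha, beta); eps = True means the tape-1 symbol read is 1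
  (i.e. head at cell 0), likewise sigma for tape 2.  Configurations are triples (i, a, b).\<close>

type_synonym minsky = "nat \<Rightarrow> bool \<Rightarrow> bool \<Rightarrow> (nat \<times> int \<times> int) option"

definition minsky_wf :: "nat \<Rightarrow> minsky \<Rightarrow> bool" where
  "minsky_wf n cmd \<longleftrightarrow>
     (\<forall>i e s j \<alpha> \<beta>. cmd i e s = Some (j, \<alpha>, \<beta>) \<longrightarrow>
        1 \<le> i \<and> i \<le> n \<and> j \<le> n \<and> \<alpha> \<in> {-1, 0, 1} \<and> \<beta> \<in> {-1, 0, 1} \<and>
        (e \<longrightarrow> \<alpha> \<ge> 0) \<and> (s \<longrightarrow> \<beta> \<ge> 0))"

definition minsky_step :: "minsky \<Rightarrow> nat \<times> nat \<times> nat \<Rightarrow> nat \<times> nat \<times> nat \<Rightarrow> bool" where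
  "minsky_step cmd c c' \<longleftrightarrow>
     (case c of (i, a, b) \<Rightarrow>
        (\<exists>j \<alpha> \<beta>. cmd i (a = 0) (b = 0) = Some (j, \<alpha>, \<beta>) \<and>
           c' = (j, nat (int a + \<alpha>), nat (int b + \<beta>))))"

definition minsky_acyclic :: "minsky \<Rightarrow> bool" where
  "minsky_acyclic cmd \<longleftrightarrow> (\<forall>c. \<not> (minsky_step cmd)\<^sup>+\<^sup>+ c c)"

definition minsky_runs_forever :: "minsky \<Rightarrow> nat \<times> nat \<times> nat \<Rightarrow> bool" where
  "minsky_runs_forever cmd c \<longleftrightarrow>
     (\<forall>c'. (minsky_step cmd)\<^sup>*\<^sup>* c c' \<longrightarrow> (\<exists>c''. minsky_step cmd c' c''))"

datatype dbase = X1 | X2 | Q nat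

text \<open>DV y a b stands for delta_1^a delta_2^b (y).\<close>
datatype dvar = DV dbase nat nat

type_synonym 'a dpoly = "(dvar \<Rightarrow>\<^sub>0 nat) \<Rightarrow>\<^sub>0 'a"

definition shift1 :: "dvar \<Rightarrow> dvar" where "shift1 v = (case v of DV y a b \<Rightarrow> DV y (Suc a) b)"
definition shift2 :: "dvar \<Rightarrow> dvar" where "shift2 v = (case v of DV y a b \<Rightarrow> DV y a (Suc b))"

definition var :: "dvar \<Rightarrow> 'a::comm_ring_1 dpoly" where
  "var v = Poly_Mapping.single (Poly_Mapping.single v 1) 1"

text \<open>The derivation of the polynomial ring extending the map on variables given by sh
  (zero on coefficients, Leibniz rule on monomials).\<close>
definition dderiv :: "(dvar \<Rightarrow> dvar) \<Rightarrow> 'a::comm_ring_1 dpoly \<Rightarrow> 'a dpoly" where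
  "dderiv sh p = (\<Sum>m\<in>Poly_Mapping.keys p. \<Sum>v\<in>Poly_Mapping.keys (m :: dvar \<Rightarrow>\<^sub>0 nat).
      Poly_Mapping.single (m - Poly_Mapping.single v 1 + Poly_Mapping.single (sh v) 1)
        (of_nat (Poly_Mapping.lookup m v) * Poly_Mapping.lookup p m))"

definition delta1 :: "'a::comm_ring_1 dpoly \<Rightarrow> 'a dpoly" where "delta1 = dderiv shift1"
definition delta2 :: "'a::comm_ring_1 dpoly \<Rightarrow> 'a dpoly" where "delta2 = dderiv shift2"

definition allowed_base :: "nat \<Rightarrow> dbase set" where
  "allowed_base n = {X1, X2} \<union> Q ` {..n}"

definition dvars :: "'a::zero dpoly \<Rightarrow> dvar set" where
  "dvars p = (\<Union>m\<in>Poly_Mapping.keys p. Poly_Mapping.keys (m :: dvar \<Rightarrow>\<^sub>0 nat))"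

definition ringA :: "nat \<Rightarrow> 'a::comm_ring_1 dpoly ring" where
  "ringA n = \<lparr>carrier = {p. \<forall>v\<in>dvars p. \<exists>y a b. v = DV y a b \<and> y \<in> allowed_base n},
              mult = (*), one = 1, zero = 0, add = (+)\<rparr>"

definition diff_ideal_gen ::
  "('b, 'c) ring_scheme \<Rightarrow> ('b \<Rightarrow> 'b) \<Rightarrow> ('b \<Rightarrow> 'b) \<Rightarrow> 'b set \<Rightarrow> 'b set" where
  "diff_ideal_gen R d1 d2 G =
     \<Inter>{I. ideal I R \<and> G \<subseteq> I \<and> (\<forall>x\<in>I. d1 x \<in> I \<and> d2 x \<in> I)}"

definition idealJ :: "nat \<Rightarrow> 'a::comm_ring_1 dpoly set" where
  "idealJ n = diff_ideal_gen (ringA n) delta1 delta2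
      {delta1 (var (DV X2 0 0)), delta2 (var (DV X1 0 0))}"

definition ringB :: "nat \<Rightarrow> 'a::comm_ring_1 dpoly set ring" where
  "ringB n = ringA n Quot idealJ n"

definition projB :: "nat \<Rightarrow> 'a::comm_ring_1 dpoly \<Rightarrow> 'a dpoly set" where
  "projB n p = idealJ n +>\<^bsub>ringA n\<^esub> p"

definition derivB :: "nat \<Rightarrow> ('a::comm_ring_1 dpoly \<Rightarrow> 'a dpoly) \<Rightarrow> 'a dpoly set \<Rightarrow> 'a dpoly set" where
  "derivB n d C = projB n (d (SOME f. f \<in> C))"

definition gen_lift :: "nat \<Rightarrow> bool \<Rightarrow> bool \<Rightarrow> nat \<Rightarrow> int \<Rightarrow> int \<Rightarrow> 'a::comm_ring_1 dpoly" where
  "gen_lift i e s j \<alpha> \<beta> =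
     var (DV X1 0 0) ^ (if e then 1 else 0) * var (DV X2 0 0) ^ (if s then 1 else 0) *
       var (DV (Q i) (if e then 0 else 1) (if s then 0 else 1))
   - var (DV X1 0 0) ^ (if e then 1 else 0) * var (DV X2 0 0) ^ (if s then 1 else 0) *
       var (DV (Q j) (nat ((if e then 0 else 1) + \<alpha>)) (nat ((if s then 0 else 1) + \<beta>)))"

definition Itilde :: "nat \<Rightarrow> minsky \<Rightarrow> 'a::comm_ring_1 dpoly set set" where
  "Itilde n cmd = diff_ideal_gen (ringB n) (derivB n delta1) (derivB n delta2)
      {projB n (gen_lift i e s j \<alpha> \<beta>) | i e s j \<alpha> \<beta>. cmd i e s = Some (j, \<alpha>, \<beta>)}"

definition g_elem :: "nat \<Rightarrow> nat \<Rightarrow> 'a::comm_ring_1 dpoly set" where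
  "g_elem n m = projB n (var (DV X1 0 0) * var (DV X2 0 0) * var (DV (Q 1) (2 ^ 2 ^ m) 0)
                        - var (DV X1 0 0) * var (DV X2 0 0) * var (DV (Q 0) 1 0))"

end

theory Submission
  imports Defs
begin


lemma pm_expand: "(p::'a::comm_ring_1 dpoly) = (\<Sum>m\<in>Poly_Mapping.keys p. Poly_Mapping.single m (Poly_Mapping.lookup p m))"
proof (rule poly_mapping_eqI)
  fix k
  show "Poly_Mapping.lookup p k = Poly_Mapping.lookup (\<Sum>m\<in>Poly_Mapping.keys p. Poly_Mapping.single m (Poly_Mapping.lookup p m)) k"
    by (cases "k \<in> Poly_Mapping.keys p")
       (simp_all add: lookup_sum lookup_single when_def sum.delta in_keys_iff)
qed

definition DT :: "(dvar \<Rightarrow> dvar) \<Rightarrow> (dvar \<Rightarrow>\<^sub>0 nat) \<Rightarrow> 'a::comm_ring_1 \<Rightarrow> 'a dpoly" where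
  "DT sh m c = (\<Sum>v\<in>Poly_Mapping.keys m.
      Poly_Mapping.single (m - Poly_Mapping.single v 1 + Poly_Mapping.single (sh v) 1)
        (of_nat (Poly_Mapping.lookup m v) * c))"

lemma DT_0[simp]: "DT sh m 0 = 0" by (simp add: DT_def)
lemma DT_add: "DT sh m (a + b) = DT sh m a + DT sh m b"
  by (simp add: DT_def distrib_left single_add sum.distrib)

lemma dderiv_DT: "dderiv sh p = (\<Sum>m\<in>Poly_Mapping.keys p. DT sh m (Poly_Mapping.lookup p m))"
  by (simp add: dderiv_def DT_def)

lemma dderiv_add: "dderiv sh (p + q) = dderiv sh p + dderiv sh q"
  unfolding dderiv_DT
  by (rule setsum_keys_plus_distrib) (simp_all add: DT_add)

lemma dderiv_zero[simp]: "dderiv sh 0 = 0" by (simp add: dderiv_def)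

lemma dderiv_single: "dderiv sh (Poly_Mapping.single m c) = DT sh m c"
  by (cases "c = 0") (simp_all add: dderiv_DT)

lemma dderiv_sum: "dderiv sh (sum f A) = (\<Sum>x\<in>A. dderiv sh (f x))"
  by (induction A rule: infinite_finite_induct) (simp_all add: dderiv_add)

lemma dderiv_uminus: "dderiv sh (- p) = - dderiv sh p"
  by (metis add_eq_0_iff dderiv_add dderiv_zero)

lemma dderiv_diff: "dderiv sh (p - q) = dderiv sh p - dderiv sh q"
  by (metis dderiv_add dderiv_uminus diff_conv_add_uminus)



lemma keys_add_nat: "Poly_Mapping.keys ((a::dvar \<Rightarrow>\<^sub>0 nat) + b) = Poly_Mapping.keys a \<union> Poly_Mapping.keys b"
  by (auto simp: in_keys_iff lookup_add)

lemma mono_shift_eq: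
  assumes "v \<in> Poly_Mapping.keys (a::dvar \<Rightarrow>\<^sub>0 nat)"
  shows "a - Poly_Mapping.single v 1 + x + b = a + b - Poly_Mapping.single v 1 + x"
  using assms by (intro poly_mapping_eqI) (auto simp: lookup_add lookup_minus lookup_single when_def in_keys_iff)

lemma DT_split:
  fixes a :: "dvar \<Rightarrow>\<^sub>0 nat"
  assumes "finite K" "Poly_Mapping.keys a \<subseteq> K" and that: "e = (c * d :: 'a::comm_ring_1)"
  shows "(\<Sum>v\<in>K. Poly_Mapping.single (a + b - Poly_Mapping.single v 1 + Poly_Mapping.single (sh v) 1)
        (of_nat (Poly_Mapping.lookup a v) * e)) = DT sh a c * Poly_Mapping.single b d"
proof -
  have "(\<Sum>v\<in>K. Poly_Mapping.single (a + b - Poly_Mapping.single v 1 + Poly_Mapping.single (sh v) 1)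
        (of_nat (Poly_Mapping.lookup a v) * e)) =
     (\<Sum>v\<in>Poly_Mapping.keys a. Poly_Mapping.single (a + b - Poly_Mapping.single v 1 + Poly_Mapping.single (sh v) 1)
        (of_nat (Poly_Mapping.lookup a v) * e))"
    using assms by (intro sum.mono_neutral_right) (auto simp: in_keys_iff)
  also have "\<dots> = DT sh a c * Poly_Mapping.single b d"
    unfolding DT_def sum_distrib_right
    by (intro sum.cong refl)
       (auto simp: mult_single that mult.assoc intro!: arg_cong2[where f=Poly_Mapping.single] poly_mapping_eqI
         simp: lookup_add lookup_minus lookup_single when_def in_keys_iff split: if_splits)
  finally show ?thesis .
qed

lemma DT_leib:
  fixes a b :: "dvar \<Rightarrow>\<^sub>0 nat" and c d :: "'a::comm_ring_1"
  shows "DT sh (a + b) (c * d) = DT sh a c * Poly_Mapping.single b d + Poly_Mapping.single a c * DT sh b d"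
proof -
  let ?K = "Poly_Mapping.keys a \<union> Poly_Mapping.keys b"
  have "DT sh (a + b) (c * d) = (\<Sum>v\<in>?K. Poly_Mapping.single (a + b - Poly_Mapping.single v 1 + Poly_Mapping.single (sh v) 1)
        (of_nat (Poly_Mapping.lookup a v) * (c * d)) + Poly_Mapping.single (a + b - Poly_Mapping.single v 1 + Poly_Mapping.single (sh v) 1)
        (of_nat (Poly_Mapping.lookup b v) * (c * d)))"
    unfolding DT_def keys_add_nat
    by (intro sum.cong refl) (simp add: lookup_add distrib_right single_add)
  also have "\<dots> = DT sh a c * Poly_Mapping.single b d + DT sh b d * Poly_Mapping.single a c"
    unfolding sum.distrib
    apply (subst DT_split[where c=c and d=d], simp, simp, simp)
    apply (subst add.commute[of a b])
    apply (subst DT_split[where c=d and d=c], simp, simp, simp)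
    by simp
  finally show ?thesis by (simp add: mult.commute)
qed

lemma dderiv_mult: "dderiv sh ((p::'a::comm_ring_1 dpoly) * q) = dderiv sh p * q + p * dderiv sh q"
proof -
  let ?P = "\<lambda>m. Poly_Mapping.single m (Poly_Mapping.lookup p m)"
  let ?Q = "\<lambda>m. Poly_Mapping.single m (Poly_Mapping.lookup q m)"
  have pq: "p * q = (\<Sum>m\<in>Poly_Mapping.keys p. \<Sum>m'\<in>Poly_Mapping.keys q. ?P m * ?Q m')"
    by (subst pm_expand[of p], subst pm_expand[of q]) (simp add: sum_product)
  have "dderiv sh (p * q) = (\<Sum>m\<in>Poly_Mapping.keys p. \<Sum>m'\<in>Poly_Mapping.keys q.
        dderiv sh (?P m) * ?Q m' + ?P m * dderiv sh (?Q m'))"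
    unfolding pq dderiv_sum
    by (intro sum.cong refl) (simp add: mult_single dderiv_single DT_leib)
  also have "\<dots> = (\<Sum>m\<in>Poly_Mapping.keys p. dderiv sh (?P m)) * (\<Sum>m\<in>Poly_Mapping.keys q. ?Q m)
     + (\<Sum>m\<in>Poly_Mapping.keys p. ?P m) * (\<Sum>m\<in>Poly_Mapping.keys q. dderiv sh (?Q m))"
    by (simp add: sum_product sum.distrib)
  also have "\<dots> = dderiv sh p * q + p * dderiv sh q"
    by (simp only: dderiv_sum[symmetric] pm_expand[symmetric])
  finally show ?thesis .
qed



definition sv :: "dvar \<Rightarrow> dvar \<Rightarrow>\<^sub>0 nat" where "sv v = Poly_Mapping.single v 1"

definition shp :: "nat \<Rightarrow> nat \<Rightarrow> nat \<Rightarrow> nat \<Rightarrow> nat \<Rightarrow> dvar \<Rightarrow>\<^sub>0 nat" where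
  "shp k l a b i = sv (DV X1 k 0) + sv (DV X2 0 l) + sv (DV (Q i) a b)"

lemma lookup_sv: "Poly_Mapping.lookup (sv v) u = (if v = u then 1 else 0)"
  by (simp add: sv_def lookup_single when_def)

lemma lookup_shp: "Poly_Mapping.lookup (shp k l a b i) u =
   (if DV X1 k 0 = u then 1 else 0) + (if DV X2 0 l = u then 1 else 0) + (if DV (Q i) a b = u then 1 else 0)"
  by (simp add: shp_def lookup_add lookup_sv)

lemma keys_shp: "Poly_Mapping.keys (shp k l a b i) = {DV X1 k 0, DV X2 0 l, DV (Q i) a b}"
  apply (auto simp: in_keys_iff lookup_shp)
  by (metis less_irrefl)

lemma shp_inj: "shp k l a b i = shp k' l' a' b' i' \<Longrightarrow> k = k' \<and> l = l' \<and> a = a' \<and> b = b' \<and> i = i'"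
proof -
  assume e: "shp k l a b i = shp k' l' a' b' i'"
  have "DV X1 k 0 \<in> Poly_Mapping.keys (shp k' l' a' b' i')" "DV X2 0 l \<in> Poly_Mapping.keys (shp k' l' a' b' i')"
      "DV (Q i) a b \<in> Poly_Mapping.keys (shp k' l' a' b' i')"
    unfolding e[symmetric] keys_shp by simp_all
  then show ?thesis unfolding keys_shp by simp
qed

definition wt :: "(nat \<times> nat \<times> nat \<Rightarrow> bool) \<Rightarrow> nat \<Rightarrow> nat \<Rightarrow> nat \<Rightarrow> nat \<Rightarrow> nat \<Rightarrow> 'a::comm_ring_1" where
  "wt cc k l a b i = (- 1) ^ (k + l) * (if cc (i, a + k, b + l) then 1 else 0)"

definition w :: "(nat \<times> nat \<times> nat \<Rightarrow> bool) \<Rightarrow> (dvar \<Rightarrow>\<^sub>0 nat) \<Rightarrow> 'a::comm_ring_1" where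
  "w cc m = (if \<exists>k l a b i. m = shp k l a b i
      then (THE x. \<exists>k l a b i. m = shp k l a b i \<and> x = wt cc k l a b i) else 0)"

lemma w_shp: "w cc (shp k l a b i) = wt cc k l a b i"
  unfolding w_def
  apply (subst if_P, blast)
  apply (rule the_equality, blast)
  using shp_inj by metis

lemma w_nonshp: "(\<And>k l a b i. m \<noteq> shp k l a b i) \<Longrightarrow> w cc m = 0"
  unfolding w_def by auto


definition Lw :: "((dvar \<Rightarrow>\<^sub>0 nat) \<Rightarrow> 'a) \<Rightarrow> 'a::comm_ring_1 dpoly \<Rightarrow> 'a" where
  "Lw f p = (\<Sum>m\<in>Poly_Mapping.keys p. f m * Poly_Mapping.lookup p m)"

lemma Lw_add: "Lw f (p + q) = Lw f p + Lw f q"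
  unfolding Lw_def by (rule setsum_keys_plus_distrib) (simp_all add: distrib_left)

lemma Lw_zero[simp]: "Lw f 0 = 0" by (simp add: Lw_def)

lemma Lw_single: "Lw f (Poly_Mapping.single m c) = f m * c"
  by (simp add: Lw_def)

lemma Lw_sum: "Lw f (sum g A) = (\<Sum>x\<in>A. Lw f (g x))"
  by (induction A rule: infinite_finite_induct) (simp_all add: Lw_add)

lemma Lw_uminus: "Lw f (- p) = - Lw f p"
  by (metis Lw_add Lw_zero add_eq_0_iff)

lemma Lw_diff: "Lw f (p - q) = Lw f p - Lw f q"
  by (metis Lw_add Lw_uminus diff_conv_add_uminus)

lemma Lw_dderiv: "Lw f (dderiv sh p) = (\<Sum>m\<in>Poly_Mapping.keys p.
     (\<Sum>v\<in>Poly_Mapping.keys m. f (m - sv v + sv (sh v)) * of_nat (Poly_Mapping.lookup m v)) * Poly_Mapping.lookup p m)"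
  unfolding dderiv_def Lw_sum Lw_single sum_distrib_right sv_def
  by (intro sum.cong refl) (simp add: mult.assoc)

lemma swap_helper:
  assumes "m - sv v + sv u = M" "v \<in> Poly_Mapping.keys m" "u \<noteq> v"
  shows "m = M - sv u + sv v" "u \<in> Poly_Mapping.keys M"
proof -
  have "Poly_Mapping.lookup M x = Poly_Mapping.lookup m x - (if v = x then 1 else 0) + (if u = x then 1 else 0)" for x
    using assms(1) by (auto simp: lookup_add lookup_minus lookup_sv)
  then show "m = M - sv u + sv v" "u \<in> Poly_Mapping.keys M"
    using assms(2,3) by (auto intro!: poly_mapping_eqI simp: lookup_add lookup_minus lookup_sv in_keys_iff)
qed

lemma shp_swap1: "shp k l a b i - sv (DV X1 k 0) + sv (DV X1 k' 0) = shp k' l a b i"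
  by (rule poly_mapping_eqI) (auto simp: lookup_add lookup_minus lookup_sv lookup_shp)
lemma shp_swap2: "shp k l a b i - sv (DV X2 0 l) + sv (DV X2 0 l') = shp k l' a b i"
  by (rule poly_mapping_eqI) (auto simp: lookup_add lookup_minus lookup_sv lookup_shp)
lemma shp_swapQ: "shp k l a b i - sv (DV (Q i) a b) + sv (DV (Q i) a' b') = shp k l a' b' i"
  by (rule poly_mapping_eqI) (auto simp: lookup_add lookup_minus lookup_sv lookup_shp)

lemma shp_minus_other1: "shp k l a b i - sv (DV X2 0 l) + sv (DV X2 a' l) = M \<Longrightarrow> 0 < a' \<Longrightarrow> w cc M = 0"
  apply (rule w_nonshp)
  apply (drule_tac f="\<lambda>M. Poly_Mapping.lookup M (DV X2 a' l)" in arg_cong)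
  by (auto simp: lookup_add lookup_minus lookup_sv lookup_shp)

lemma shp_minus_other2: "shp k l a b i - sv (DV X1 k 0) + sv (DV X1 k b') = M \<Longrightarrow> 0 < b' \<Longrightarrow> w cc M = 0"
  apply (rule w_nonshp)
  apply (drule_tac f="\<lambda>M. Poly_Mapping.lookup M (DV X1 k b')" in arg_cong)
  by (auto simp: lookup_add lookup_minus lookup_sv lookup_shp)



lemma shift1_DV[simp]: "shift1 (DV y a b) = DV y (Suc a) b" by (simp add: shift1_def)
lemma shift2_DV[simp]: "shift2 (DV y a b) = DV y a (Suc b)" by (simp add: shift2_def)

lemma shp_keys_distinct: "DV X1 k 0 \<noteq> DV X2 0 l" "DV X1 k 0 \<noteq> DV (Q i) a b" "DV X2 0 l \<noteq> DV (Q i) a b"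
  by simp_all

lemma sum_shp:
  "(\<Sum>v\<in>Poly_Mapping.keys (shp k l a b i). f v) = f (DV X1 k 0) + f (DV X2 0 l) + f (DV (Q i) a b)"
  by (simp add: keys_shp add.assoc)

lemma inner1: "(\<Sum>v\<in>Poly_Mapping.keys m. w cc (m - sv v + sv (shift1 v)) * of_nat (Poly_Mapping.lookup m v)) = (0::'a::comm_ring_1)"
proof (cases "\<exists>k l a b i. m = shp k l a b i")
  case True
  then obtain k l a b i where m: "m = shp k l a b i" by blast
  have t2: "w cc (shp k l a b i - sv (DV X2 0 l) + sv (DV X2 (Suc 0) l)) = (0::'a)"
    by (rule shp_minus_other1) auto
  show ?thesis
    unfolding m sum_shp
    by (simp add: lookup_shp shp_swap1 shp_swapQ w_shp t2 wt_def)
next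
  case False
  have "w cc (m - sv v + sv (shift1 v)) = (0::'a)" if v: "v \<in> Poly_Mapping.keys m" for v
  proof (rule w_nonshp, rule notI)
    fix k l a b i assume e: "m - sv v + sv (shift1 v) = shp k l a b i"
    obtain y a' b' where vv: "v = DV y a' b'" by (cases v) auto
    have ne: "shift1 v \<noteq> v" by (simp add: vv)
    note h = swap_helper[OF e v ne]
    from h(2) have "shift1 v \<in> {DV X1 k 0, DV X2 0 l, DV (Q i) a b}" by (simp add: keys_shp)
    then consider "y = X1" "k = Suc a'" "b' = 0" | "y = Q i" "a = Suc a'" "b' = b"
      by (auto simp: vv)
    then show False
    proof cases
      case 1 then show ?thesis using h(1) False by (simp add: vv shp_swap1) blast
    next
      case 2 then show ?thesis using h(1) False by (simp add: vv shp_swapQ) blast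
    qed
  qed
  then show ?thesis by simp
qed

lemma inner2: "(\<Sum>v\<in>Poly_Mapping.keys m. w cc (m - sv v + sv (shift2 v)) * of_nat (Poly_Mapping.lookup m v)) = (0::'a::comm_ring_1)"
proof (cases "\<exists>k l a b i. m = shp k l a b i")
  case True
  then obtain k l a b i where m: "m = shp k l a b i" by blast
  have t1: "w cc (shp k l a b i - sv (DV X1 k 0) + sv (DV X1 k (Suc 0))) = (0::'a)"
    by (rule shp_minus_other2) auto
  show ?thesis
    unfolding m sum_shp
    by (simp add: lookup_shp shp_swap2 shp_swapQ w_shp t1 wt_def)
next
  case False
  have "w cc (m - sv v + sv (shift2 v)) = (0::'a)" if v: "v \<in> Poly_Mapping.keys m" for v
  proof (rule w_nonshp, rule notI)
    fix k l a b i assume e: "m - sv v + sv (shift2 v) = shp k l a b i"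
    obtain y a' b' where vv: "v = DV y a' b'" by (cases v) auto
    have ne: "shift2 v \<noteq> v" by (simp add: vv)
    note h = swap_helper[OF e v ne]
    from h(2) have "shift2 v \<in> {DV X1 k 0, DV X2 0 l, DV (Q i) a b}" by (simp add: keys_shp)
    then consider "y = X2" "l = Suc b'" "a' = 0" | "y = Q i" "b = Suc b'" "a' = a"
      by (auto simp: vv)
    then show False
    proof cases
      case 1 then show ?thesis using h(1) False by (simp add: vv shp_swap2) blast
    next
      case 2 then show ?thesis using h(1) False by (simp add: vv shp_swapQ) blast
    qed
  qed
  then show ?thesis by simp
qed

lemma L_delta1: "Lw (w cc) (delta1 p) = (0::'a::comm_ring_1)"
  unfolding delta1_def Lw_dderiv inner1 by simp

lemma L_delta2: "Lw (w cc) (delta2 p) = (0::'a::comm_ring_1)"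
  unfolding delta2_def Lw_dderiv inner2 by simp



lemma Lw_mult_single: "Lw f (r * Poly_Mapping.single m (1::'a::comm_ring_1)) =
   (\<Sum>x\<in>Poly_Mapping.keys r. f (x + m) * Poly_Mapping.lookup r x)"
  apply (subst pm_expand[of r])
  by (simp add: sum_distrib_right mult_single Lw_sum Lw_single)

definition EE :: "bool \<Rightarrow> bool \<Rightarrow> dvar \<Rightarrow>\<^sub>0 nat" where
  "EE e s = (if e then sv (DV X1 0 0) else 0) + (if s then sv (DV X2 0 0) else 0)"

lemma var_sv: "var v = Poly_Mapping.single (sv v) 1"
  by (simp add: var_def sv_def)

lemma var_pow: "(var v :: 'a::comm_ring_1 dpoly) ^ (if e then 1 else 0) = Poly_Mapping.single (if e then sv v else 0) 1"
  by (simp add: var_sv)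

lemma gen_lift_eq: "(gen_lift i e s j \<alpha> \<beta> :: 'a::comm_ring_1 dpoly) =
   Poly_Mapping.single (EE e s + sv (DV (Q i) (if e then 0 else 1) (if s then 0 else 1))) 1 -
   Poly_Mapping.single (EE e s + sv (DV (Q j) (nat ((if e then 0 else 1) + \<alpha>)) (nat ((if s then 0 else 1) + \<beta>)))) 1"
  unfolding gen_lift_def var_pow
  by (simp add: var_sv mult_single EE_def)

lemma g_elem_eq: "(var (DV X1 0 0) * var (DV X2 0 0) * var (DV (Q 1) (2 ^ 2 ^ m) 0)
                        - var (DV X1 0 0) * var (DV X2 0 0) * var (DV (Q 0) 1 0) :: 'a::comm_ring_1 dpoly) =
   Poly_Mapping.single (shp 0 0 (2 ^ 2 ^ m) 0 1) 1 - Poly_Mapping.single (shp 0 0 1 0 0) 1"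
  by (simp add: var_sv mult_single shp_def)

lemma w_addQ0:
  assumes "\<And>k l. y \<noteq> sv (DV X1 k 0) + sv (DV X2 0 l)"
  shows "w cc (y + sv (DV (Q i) a b)) = 0"
proof (rule w_nonshp, rule notI)
  fix k l a' b' i' assume e: "y + sv (DV (Q i) a b) = shp k l a' b' i'"
  have "Poly_Mapping.lookup (y + sv (DV (Q i) a b)) (DV (Q i) a b) \<noteq> 0"
    by (simp add: lookup_add lookup_sv)
  then have "DV (Q i) a b \<in> Poly_Mapping.keys (shp k l a' b' i')"
    unfolding e[symmetric] by (simp add: in_keys_iff)
  then have "DV (Q i) a b = DV (Q i') a' b'" by (simp add: keys_shp)
  then have "y + sv (DV (Q i) a b) = (sv (DV X1 k 0) + sv (DV X2 0 l)) + sv (DV (Q i) a b)"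
    using e by (simp add: shp_def)
  then have "y = sv (DV X1 k 0) + sv (DV X2 0 l)" by simp
  with assms show False by blast
qed

lemma w_gen:
  fixes cmd :: minsky and cc :: "nat \<times> nat \<times> nat \<Rightarrow> bool"
  assumes wf: "minsky_wf n cmd" and c: "cmd i e s = Some (j, \<alpha>, \<beta>)"
    and hcl: "\<And>c c'. minsky_step cmd c c' \<Longrightarrow> cc c = cc c'"
  shows "(w cc (x + (EE e s + sv (DV (Q i) (if e then 0 else 1) (if s then 0 else 1)))) :: 'a::comm_ring_1) =
         w cc (x + (EE e s + sv (DV (Q j) (nat ((if e then 0 else 1) + \<alpha>)) (nat ((if s then 0 else 1) + \<beta>)))))"
proof (cases "\<exists>k l. x + EE e s = sv (DV X1 k 0) + sv (DV X2 0 l)")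
  case True
  then obtain k l where kl: "x + EE e s = sv (DV X1 k 0) + sv (DV X2 0 l)" by blast
  have ab: "\<alpha> \<in> {-1, 0, 1}" "\<beta> \<in> {-1, 0, 1}" "e \<longrightarrow> \<alpha> \<ge> 0" "s \<longrightarrow> \<beta> \<ge> 0"
    using wf c unfolding minsky_wf_def by blast+
  have k0: "e \<Longrightarrow> k = 0"
  proof -
    assume e
    have "Poly_Mapping.lookup (x + EE e s) (DV X1 0 0) \<noteq> 0"
      using \<open>e\<close> by (simp add: EE_def lookup_add lookup_sv)
    then show "k = 0" unfolding kl by (simp add: lookup_add lookup_sv split: if_splits)
  qed
  have l0: "s \<Longrightarrow> l = 0"
  proof -
    assume s
    have "Poly_Mapping.lookup (x + EE e s) (DV X2 0 0) \<noteq> 0"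
      using \<open>s\<close> by (simp add: EE_def lookup_add lookup_sv)
    then show "l = 0" unfolding kl by (simp add: lookup_add lookup_sv split: if_splits)
  qed
  define a0 where "a0 = (if e then 0 else 1::nat)"
  define b0 where "b0 = (if s then 0 else 1::nat)"
  have st: "minsky_step cmd (i, a0 + k, b0 + l)
             (j, nat ((if e then 0 else 1) + \<alpha>) + k, nat ((if s then 0 else 1) + \<beta>) + l)"
    unfolding minsky_step_def
    using c ab k0 l0 by (auto simp: a0_def b0_def)
  have eq1: "x + (EE e s + sv (DV (Q i) (if e then 0 else 1) (if s then 0 else 1))) = shp k l a0 b0 i"
    by (simp add: add.assoc[symmetric] kl shp_def a0_def b0_def)
  have eq2: "x + (EE e s + sv (DV (Q j) (nat ((if e then 0 else 1) + \<alpha>)) (nat ((if s then 0 else 1) + \<beta>))))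
     = shp k l (nat ((if e then 0 else 1) + \<alpha>)) (nat ((if s then 0 else 1) + \<beta>)) j"
    by (simp add: add.assoc[symmetric] kl shp_def)
  show ?thesis
    unfolding eq1 eq2 w_shp wt_def using hcl[OF st] by (simp add: add.commute)
next
  case False
  then show ?thesis
    by (simp add: add.assoc[symmetric] w_addQ0)
qed



fun bs :: "dvar \<Rightarrow> dbase" where "bs (DV y a b) = y"

lemma bs_shift[simp]: "bs (shift1 v) = bs v" "bs (shift2 v) = bs v"
  by (cases v; simp)+

lemma carrier_iff: "p \<in> carrier (ringA n) \<longleftrightarrow> (\<forall>v\<in>dvars p. bs v \<in> allowed_base n)"
proof -
  have "(\<exists>y a b. v = DV y a b \<and> y \<in> allowed_base n) \<longleftrightarrow> bs v \<in> allowed_base n" for v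
    by (cases v) auto
  then show ?thesis by (simp add: ringA_def)
qed

lemma ringA_ops[simp]: "mult (ringA n) = (*)" "add (ringA n) = (+)" "zero (ringA n) = 0" "one (ringA n) = 1"
  by (simp_all add: ringA_def)

lemma dvars_add: "dvars (p + q) \<subseteq> dvars p \<union> dvars q"
  unfolding dvars_def using keys_add[of p q] by blast

lemma dvars_uminus: "dvars (- (p::'a::comm_ring_1 dpoly)) = dvars p"
  unfolding dvars_def by simp

lemma dvars_mult: "dvars ((p::'a::comm_ring_1 dpoly) * q) \<subseteq> dvars p \<union> dvars q"
  unfolding dvars_def using keys_mult[of p q] by (force simp: keys_add_nat)

lemma dvars_zero[simp]: "dvars 0 = {}" by (simp add: dvars_def)
lemma dvars_one[simp]: "dvars (1::'a::comm_ring_1 dpoly) = {}" by (simp add: dvars_def)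

lemma dvars_single: "dvars (Poly_Mapping.single m c) \<subseteq> Poly_Mapping.keys m"
  by (simp add: dvars_def)

lemma dvars_sum: "dvars (sum f A) \<subseteq> (\<Union>x\<in>A. dvars (f x))"
  unfolding dvars_def using keys_sum[of f A] by blast

lemma keys_shift_mono: "v \<in> Poly_Mapping.keys m \<Longrightarrow>
   Poly_Mapping.keys (m - sv v + sv u) \<subseteq> Poly_Mapping.keys m \<union> {u}"
  by (auto simp: in_keys_iff lookup_add lookup_minus lookup_sv split: if_splits)

lemma dvars_dderiv: "dvars (dderiv sh (p::'a::comm_ring_1 dpoly)) \<subseteq> dvars p \<union> sh ` dvars p"
proof -
  have "dvars (dderiv sh p) \<subseteq> (\<Union>m\<in>Poly_Mapping.keys p. \<Union>v\<in>Poly_Mapping.keys m. dvars (Poly_Mapping.single (m - sv v + sv (sh v))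
        (of_nat (Poly_Mapping.lookup m v) * Poly_Mapping.lookup p m)))"
    unfolding dderiv_def sv_def
    by (rule order_trans[OF dvars_sum]) (intro UN_mono order_refl dvars_sum)
  also have "\<dots> \<subseteq> dvars p \<union> sh ` dvars p"
    using dvars_single keys_shift_mono unfolding dvars_def by fastforce
  finally show ?thesis .
qed

lemma carrier_add: "p \<in> carrier (ringA n) \<Longrightarrow> q \<in> carrier (ringA n) \<Longrightarrow> p + q \<in> carrier (ringA n)"
  unfolding carrier_iff using dvars_add by blast
lemma carrier_mult: "p \<in> carrier (ringA n) \<Longrightarrow> q \<in> carrier (ringA n) \<Longrightarrow> p * q \<in> carrier (ringA n)"
  unfolding carrier_iff using dvars_mult by blast
lemma carrier_uminus: "p \<in> carrier (ringA n) \<Longrightarrow> - p \<in> carrier (ringA n)"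
  unfolding carrier_iff using dvars_uminus by blast
lemma carrier_diff: "p \<in> carrier (ringA n) \<Longrightarrow> q \<in> carrier (ringA n) \<Longrightarrow> p - q \<in> carrier (ringA n)"
  by (metis carrier_add carrier_uminus diff_conv_add_uminus)
lemma carrier_zero: "0 \<in> carrier (ringA n)" unfolding carrier_iff by simp
lemma carrier_one: "1 \<in> carrier (ringA n)" unfolding carrier_iff by simp
lemma carrier_d1: "p \<in> carrier (ringA n) \<Longrightarrow> delta1 p \<in> carrier (ringA n)"
  unfolding carrier_iff delta1_def using dvars_dderiv by fastforce
lemma carrier_d2: "p \<in> carrier (ringA n) \<Longrightarrow> delta2 p \<in> carrier (ringA n)"
  unfolding carrier_iff delta2_def using dvars_dderiv by fastforce
lemma carrier_single: "(\<And>v. v \<in> Poly_Mapping.keys m \<Longrightarrow> bs v \<in> allowed_base n) \<Longrightarrow>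
   Poly_Mapping.single m c \<in> carrier (ringA n)"
  unfolding carrier_iff using dvars_single by blast

lemma cring_A: "cring (ringA n :: 'a::comm_ring_1 dpoly ring)"
proof (rule cringI)
  show "abelian_group (ringA n :: 'a dpoly ring)"
    by (rule abelian_groupI)
       (auto simp: carrier_add carrier_zero intro!: bexI[of _ "- _"] carrier_uminus)
  show "comm_monoid (ringA n :: 'a dpoly ring)"
    by (rule comm_monoidI) (auto simp: carrier_mult carrier_one mult.assoc mult.commute)
qed (simp add: distrib_right)



lemma step_det: "minsky_step cmd x y \<Longrightarrow> minsky_step cmd x z \<Longrightarrow> y = z"
  unfolding minsky_step_def by (cases x) auto

lemma equiv_join:
  assumes "(\<lambda>x y. minsky_step cmd x y \<or> minsky_step cmd y x)\<^sup>*\<^sup>* x y"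
  shows "\<exists>z. (minsky_step cmd)\<^sup>*\<^sup>* x z \<and> (minsky_step cmd)\<^sup>*\<^sup>* y z"
  using assms
proof (induction rule: rtranclp_induct)
  case base then show ?case by blast
next
  case (step y y')
  then obtain z where xz: "(minsky_step cmd)\<^sup>*\<^sup>* x z" and yz: "(minsky_step cmd)\<^sup>*\<^sup>* y z" by blast
  from step.hyps(2) show ?case
  proof
    assume st: "minsky_step cmd y y'"
    from yz show ?thesis
    proof (rule converse_rtranclpE)
      assume "y = z"
      then show ?thesis using xz st by (metis rtranclp.rtrancl_into_rtrancl rtranclp.rtrancl_refl)
    next
      fix u assume u1: "minsky_step cmd y u" and u2: "(minsky_step cmd)\<^sup>*\<^sup>* u z"
      then have "u = y'" using st step_det by metis
      then show ?thesis using u2 xz by blast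
    qed
  next
    assume "minsky_step cmd y' y"
    then show ?thesis using xz yz by (meson converse_rtranclp_into_rtranclp)
  qed
qed

lemma not_connected:
  assumes wf: "minsky_wf n cmd" and rf: "minsky_runs_forever cmd c0"
  shows "\<not> (\<lambda>x y. minsky_step cmd x y \<or> minsky_step cmd y x)\<^sup>*\<^sup>* c0 (0, a, b)"
proof
  have trm: "\<not> minsky_step cmd (0, a', b') c" for a' b' c
    using wf unfolding minsky_step_def minsky_wf_def by fastforce
  assume "(\<lambda>x y. minsky_step cmd x y \<or> minsky_step cmd y x)\<^sup>*\<^sup>* c0 (0, a, b)"
  from equiv_join[OF this] obtain z where "(minsky_step cmd)\<^sup>*\<^sup>* c0 z" "(minsky_step cmd)\<^sup>*\<^sup>* (0, a, b) z" by blast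
  moreover from this(2) have "z = (0, a, b)"
    by (cases rule: converse_rtranclpE) (auto simp: trm)
  ultimately show False using rf trm unfolding minsky_runs_forever_def by blast
qed



lemma keys_sv[simp]: "Poly_Mapping.keys (sv v) = {v}" by (simp add: sv_def)

lemma keys_EE: "Poly_Mapping.keys (EE e s) \<subseteq> {DV X1 0 0, DV X2 0 0}"
  by (auto simp: EE_def keys_add_nat)

theorem lemma7:
  fixes n :: nat and cmd :: minsky and S :: "nat set" and m :: nat
  assumes nontriv: "(1::'a::comm_ring_1) \<noteq> 0"
    and n1: "1 \<le> n"
    and wf: "minsky_wf n cmd"
    and acyc: "minsky_acyclic cmd"
    and inS: "\<And>x. x \<in> S \<Longrightarrow> (minsky_step cmd)\<^sup>*\<^sup>* (1, 2 ^ 2 ^ x, 0) (0, 1, 0)"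
    and notS: "\<And>x. x \<notin> S \<Longrightarrow> minsky_runs_forever cmd (1, 2 ^ 2 ^ x, 0)"
    and mem: "(g_elem n m :: 'a dpoly set) \<in> Itilde n cmd"
  shows "m \<in> S"
proof (rule ccontr)
  assume mS: "m \<notin> S"
  define c0 where "c0 = (1::nat, 2 ^ 2 ^ m :: nat, 0::nat)"
  define cc where "cc = (\<lambda>x y. minsky_step cmd x y \<or> minsky_step cmd y x)\<^sup>*\<^sup>* c0"
  have hcl: "cc c = cc c'" if "minsky_step cmd c c'" for c c'
  proof
    assume "cc c" then show "cc c'" unfolding cc_def using that
      by (metis (mono_tags, lifting) rtranclp.rtrancl_into_rtrancl)
  next
    assume "cc c'" then show "cc c" unfolding cc_def using that
      by (metis (mono_tags, lifting) rtranclp.rtrancl_into_rtrancl)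
  qed
  have cc0: "cc (1, 2 ^ 2 ^ m, 0)" unfolding cc_def c0_def by simp
  have cct: "\<not> cc (0, 1, 0)"
    unfolding cc_def using not_connected[OF wf notS[OF mS]] by (simp add: c0_def)
  let ?A = "ringA n :: 'a dpoly ring"
  interpret A: cring ?A by (rule cring_A)
  define L where "L = (Lw (w cc) :: 'a dpoly \<Rightarrow> 'a)"
  define I0 where "I0 = {p \<in> carrier ?A. \<forall>r\<in>carrier ?A. L (r * p) = 0}"
  have I0_carr: "I0 \<subseteq> carrier ?A" unfolding I0_def by blast
  have ainv: "a_inv ?A p = - p" if "p \<in> carrier ?A" for p
    by (rule A.minus_equality) (simp_all add: that carrier_uminus)
  have I0_ideal: "ideal I0 ?A"
  proof (rule idealI)
    show "ring ?A" by (rule A.ring_axioms)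
    show "subgroup I0 (add_monoid ?A)"
    proof (rule subgroup.intro)
      show "I0 \<subseteq> carrier (add_monoid ?A)" using I0_carr by simp
      show "x \<otimes>\<^bsub>add_monoid ?A\<^esub> y \<in> I0" if "x \<in> I0" "y \<in> I0" for x y
        using that unfolding I0_def by (simp add: carrier_add distrib_left Lw_add L_def)
      show "\<one>\<^bsub>add_monoid ?A\<^esub> \<in> I0" unfolding I0_def by (simp add: carrier_zero L_def)
      show "inv\<^bsub>add_monoid ?A\<^esub> x \<in> I0" if "x \<in> I0" for x
      proof -
        have "inv\<^bsub>add_monoid ?A\<^esub> x = - x"
          using ainv[of x] that I0_carr by (auto simp: a_inv_def)
        then show ?thesis using that unfolding I0_def by (simp add: carrier_uminus Lw_uminus L_def)
      qed
    qed
    show "x \<otimes>\<^bsub>?A\<^esub> a \<in> I0" if "a \<in> I0" "x \<in> carrier ?A" for a x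
      using that unfolding I0_def by (simp add: carrier_mult mult.assoc[symmetric])
    show "a \<otimes>\<^bsub>?A\<^esub> x \<in> I0" if "a \<in> I0" "x \<in> carrier ?A" for a x
    proof -
      have "x * a \<in> I0" using that unfolding I0_def by (simp add: carrier_mult mult.assoc[symmetric])
      then show ?thesis by (simp add: mult.commute)
    qed
  qed
  interpret I0: ideal I0 ?A by (rule I0_ideal)
  have I0_d1: "delta1 p \<in> I0" if "p \<in> I0" for p
  proof -
    have pc: "p \<in> carrier ?A" using that I0_carr by blast
    have "L (r * delta1 p) = 0" if r: "r \<in> carrier ?A" for r
    proof -
      have "r * delta1 p = delta1 (r * p) - delta1 r * p"
        by (simp add: delta1_def dderiv_mult)
      then show ?thesis
        using \<open>p \<in> I0\<close> carrier_d1[OF r] unfolding I0_def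
        by (simp add: Lw_diff L_def L_delta1)
    qed
    then show ?thesis unfolding I0_def using carrier_d1[OF pc] by blast
  qed
  have I0_d2: "delta2 p \<in> I0" if "p \<in> I0" for p
  proof -
    have pc: "p \<in> carrier ?A" using that I0_carr by blast
    have "L (r * delta2 p) = 0" if r: "r \<in> carrier ?A" for r
    proof -
      have "r * delta2 p = delta2 (r * p) - delta2 r * p"
        by (simp add: delta2_def dderiv_mult)
      then show ?thesis
        using \<open>p \<in> I0\<close> carrier_d2[OF r] unfolding I0_def
        by (simp add: Lw_diff L_def L_delta2)
    qed
    then show ?thesis unfolding I0_def using carrier_d2[OF pc] by blast
  qed
  have var_carr: "var v \<in> carrier ?A" if "bs v \<in> allowed_base n" for v
    unfolding var_sv by (rule carrier_single) (simp add: that)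
  have d_var: "dderiv sh (var v) = var (sh v)" for sh v
    by (simp add: var_sv dderiv_single DT_def sv_def)
  have L_badvar: "L (r * var v) = 0" if "\<And>k l a b i. Poly_Mapping.lookup (shp k l a b i) v = 0" for r v
  proof -
    have "w cc (x + sv v) = (0::'a)" for x
    proof (rule w_nonshp, rule notI)
      fix k l a b i assume e: "x + sv v = shp k l a b i"
      have "Poly_Mapping.lookup (shp k l a b i) v \<noteq> 0"
        unfolding e[symmetric] by (simp add: lookup_add lookup_sv)
      then show False using that[of k l a b i] by simp
    qed
    then show ?thesis unfolding L_def var_sv Lw_mult_single by simp
  qed
  have bad1: "delta1 (var (DV X2 0 0)) \<in> I0"
  proof -
    have "delta1 (var (DV X2 0 0)) = (var (DV X2 1 0) :: 'a dpoly)"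
      by (simp add: delta1_def d_var)
    moreover have "var (DV X2 1 0) \<in> I0"
      unfolding I0_def
      by (auto intro!: var_carr L_badvar simp: allowed_base_def lookup_shp)
    ultimately show ?thesis by simp
  qed
  have bad2: "delta2 (var (DV X1 0 0)) \<in> I0"
  proof -
    have "delta2 (var (DV X1 0 0)) = (var (DV X1 0 1) :: 'a dpoly)"
      by (simp add: delta2_def d_var)
    moreover have "var (DV X1 0 1) \<in> I0"
      unfolding I0_def
      by (auto intro!: var_carr L_badvar simp: allowed_base_def lookup_shp)
    ultimately show ?thesis by simp
  qed
  let ?J = "idealJ n :: 'a dpoly set"
  let ?Fam = "{I. ideal I ?A \<and> {delta1 (var (DV X2 0 0)), delta2 (var (DV X1 0 0))} \<subseteq> I \<and>
                 (\<forall>x\<in>I. delta1 x \<in> I \<and> delta2 x \<in> I)}"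
  have J_eq: "?J = \<Inter>?Fam" unfolding idealJ_def diff_ideal_gen_def by simp
  have carr_fam: "carrier ?A \<in> ?Fam"
    using A.oneideal carrier_d1 carrier_d2 var_carr by (auto simp: allowed_base_def)
  have J_ideal: "ideal ?J ?A"
    unfolding J_eq by (rule A.i_Intersect) (use carr_fam in auto)
  interpret J: ideal ?J ?A by (rule J_ideal)
  have J_sub: "?J \<subseteq> I0"
    unfolding J_eq using I0_ideal bad1 bad2 I0_d1 I0_d2 by (intro Inter_lower) auto
  define T where "T = (a_r_coset ?A ?J) ` I0"
  have T_ideal: "ideal T (ringB n)"
    unfolding T_def ringB_def by (rule A.ring_ideal_imp_quot_ideal[OF J_ideal I0_ideal])
  have coset_mem: "f \<in> I0" if "f \<in> a_r_coset ?A ?J p" "p \<in> I0" for f p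
  proof -
    from that(1) obtain j where "j \<in> ?J" "f = j + p"
      unfolding a_r_coset_def' by auto
    then show ?thesis using J_sub that(2) I0.a_closed by auto
  qed
  have T_d: "derivB n d x \<in> T" if "x \<in> T" and dI: "\<And>p. p \<in> I0 \<Longrightarrow> d p \<in> I0" for x d
  proof -
    obtain p where p: "p \<in> I0" "x = a_r_coset ?A ?J p" using \<open>x \<in> T\<close> unfolding T_def by blast
    have "p \<in> x" using p J.a_rcos_self I0_carr by blast
    then have "(SOME f. f \<in> x) \<in> x" by (rule someI)
    then have "(SOME f. f \<in> x) \<in> I0" using coset_mem p by blast
    then show ?thesis unfolding derivB_def projB_def T_def using dI by blast
  qed
  have G_sub: "{projB n (gen_lift i e s j \<alpha> \<beta>) | i e s j \<alpha> \<beta>. cmd i e s = Some (j, \<alpha>, \<beta>)} \<subseteq> T"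
  proof clarify
    fix i e s j \<alpha> \<beta> assume c: "cmd i e s = Some (j, \<alpha>, \<beta>)"
    have ij: "i \<le> n" "j \<le> n" using wf c unfolding minsky_wf_def by blast+
    let ?m1 = "EE e s + sv (DV (Q i) (if e then 0 else 1) (if s then 0 else 1))"
    let ?m2 = "EE e s + sv (DV (Q j) (nat ((if e then 0 else 1) + \<alpha>)) (nat ((if s then 0 else 1) + \<beta>)))"
    have k1: "Poly_Mapping.keys ?m1 \<subseteq> {DV X1 0 0, DV X2 0 0, DV (Q i) (if e then 0 else 1) (if s then 0 else 1)}"
      using keys_EE by (auto simp: keys_add_nat)
    have k2: "Poly_Mapping.keys ?m2 \<subseteq> {DV X1 0 0, DV X2 0 0, DV (Q j) (nat ((if e then 0 else 1) + \<alpha>)) (nat ((if s then 0 else 1) + \<beta>))}"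
      using keys_EE by (auto simp: keys_add_nat)
    have carr: "(gen_lift i e s j \<alpha> \<beta> :: 'a dpoly) \<in> carrier ?A"
      unfolding gen_lift_eq
      apply (intro carrier_diff carrier_single)
      using k1 k2 ij by (auto simp: allowed_base_def)
    have wg: "w cc (x + ?m1) = (w cc (x + ?m2) :: 'a)" for x
      by (rule w_gen[OF wf c]) (rule hcl)
    have "L (r * gen_lift i e s j \<alpha> \<beta>) = 0" for r
      unfolding gen_lift_eq L_def right_diff_distrib Lw_diff Lw_mult_single wg by simp
    then have "gen_lift i e s j \<alpha> \<beta> \<in> I0" unfolding I0_def using carr by blast
    then show "projB n (gen_lift i e s j \<alpha> \<beta>) \<in> T" unfolding projB_def T_def by blast
  qed
  have "Itilde n cmd \<subseteq> T"
    unfolding Itilde_def diff_ideal_gen_def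
    using T_ideal G_sub T_d I0_d1 I0_d2 by (intro Inter_lower) auto
  with mem have gT: "g_elem n m \<in> T" by blast
  define gm where "gm = (var (DV X1 0 0) * var (DV X2 0 0) * var (DV (Q 1) (2 ^ 2 ^ m) 0)
                        - var (DV X1 0 0) * var (DV X2 0 0) * var (DV (Q 0) 1 0) :: 'a dpoly)"
  have gm_eq: "gm = Poly_Mapping.single (shp 0 0 (2 ^ 2 ^ m) 0 1) 1 - Poly_Mapping.single (shp 0 0 1 0 0) 1"
    unfolding gm_def by (rule g_elem_eq)
  have gm_carr: "gm \<in> carrier ?A"
    unfolding gm_eq
    by (intro carrier_diff carrier_single) (use n1 in \<open>auto simp: keys_shp allowed_base_def\<close>)
  from gT obtain p where p: "p \<in> I0" "a_r_coset ?A ?J gm = a_r_coset ?A ?J p"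
    unfolding T_def g_elem_def projB_def gm_def[symmetric] by blast
  have "gm \<in> a_r_coset ?A ?J p" using J.a_rcos_self[OF gm_carr] p(2) by simp
  then have "gm \<in> I0" using coset_mem p(1) by blast
  then have "L (1 * gm) = 0" unfolding I0_def using carrier_one by blast
  moreover have "L (1 * gm) = 1"
    unfolding gm_eq L_def using cc0 cct by (simp add: Lw_diff Lw_single w_shp wt_def)
  ultimately show False using nontriv by simp
qed


end
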